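(* Let $d\ge1$. As a multigraded vector space, the square $F_d(\mathfrak B)^2$ of the free bicommutative algebra is isomorphic to $\omega(K[Y_d])\otimes\omega(K[Z_d])$, where $\omega$ denotes the augmentation ideal (polynomials without constant term) and both $y_i$ and $z_i$ are given degree $1$ in the $i$-th grading. As a $GL_d$-module, $F_d(\mathfrak B)^2\cong\bigoplus_{p,q\ge 1}W_d(p)\otimes W_d(q)$.
   Context: $K$ is a field of characteristic $0$. $\mathfrak B$ is the variety of bicommutative algebras (identities $(x_1x_2)x_3=(x_1x_3)x_2$ and $x_1(x_2x_3)=x_2(x_1x_3)$); $F_d(\mathfrak B)$ is its free algebra on $x_1,\dots,x_d$, multigraded by the degrees in each $x_i$. $GL_d$ acts on $F_d(\mathfrak B)$ by extending its natural action on $\mathrm{span}(x_1,\dots,x_d)$ to algebra automorphisms. $K[Y_d]=K[y_1,\dots,y_d]$, $K[Z_d]=K[z_1,\dots,z_d]$ are polynomial rings, with $GL_d$ acting on $\mathrm{span}(y_i)$ and $\mathrm{span}(z_i)$ as on $\mathrm{span}(x_i)$. $W_d(p)$ is the irreducible polynomial $GL_d$-module indexed by the one-row partition $(p)$ (isomorphic to the homogeneous polynomials of degree $p$ in $d$ variables). *)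

theory Defs
  imports "HOL-Library.Poly_Mapping"
begin

text \<open>Nonassociative monomials: binary trees whose leaves are generator indices.\<close>
datatype btree = Leaf nat | Node btree btree

fun leaves :: "btree \<Rightarrow> nat set" where
  "leaves (Leaf i) = {i}"
| "leaves (Node a b) = leaves a \<union> leaves b"

fun tdeg :: "btree \<Rightarrow> nat \<Rightarrow> nat" where
  "tdeg (Leaf i) = (\<lambda>j. if j = i then 1 else 0)"
| "tdeg (Node a b) = (\<lambda>j. tdeg a j + tdeg b j)"

text \<open>Elements of the free nonassociative algebra: finitely supported coefficient
  functions on trees in the generators x_0..x_(d-1).\<close>
definition FA :: "nat \<Rightarrow> (btree \<Rightarrow> 'k::field) set" where
  "FA d = {f. finite {t. f t \<noteq> 0} \<and> (\<forall>t. f t \<noteq> 0 \<longrightarrow> leaves t \<subseteq> {..<d})}"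

definition fadd :: "(btree \<Rightarrow> 'k::field) \<Rightarrow> (btree \<Rightarrow> 'k) \<Rightarrow> btree \<Rightarrow> 'k" where
  "fadd f g = (\<lambda>t. f t + g t)"

definition fsmul :: "'k::field \<Rightarrow> (btree \<Rightarrow> 'k) \<Rightarrow> btree \<Rightarrow> 'k" where
  "fsmul c f = (\<lambda>t. c * f t)"

definition fzero :: "btree \<Rightarrow> 'k::field" where
  "fzero = (\<lambda>t. 0)"

text \<open>Bilinear multiplication: (x_a)(x_b) = x_(Node a b).\<close>
definition fmult :: "(btree \<Rightarrow> 'k::field) \<Rightarrow> (btree \<Rightarrow> 'k) \<Rightarrow> btree \<Rightarrow> 'k" where
  "fmult f g = (\<lambda>t. case t of Leaf _ \<Rightarrow> 0 | Node a b \<Rightarrow> f a * g b)"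

definition fminus :: "(btree \<Rightarrow> 'k::field) \<Rightarrow> (btree \<Rightarrow> 'k) \<Rightarrow> btree \<Rightarrow> 'k" where
  "fminus f g = (\<lambda>t. f t - g t)"

text \<open>The T-ideal of bicommutative identities in the free nonassociative algebra,
  i.e. the ideal generated by all evaluations of the two defining identities.
  The free bicommutative algebra F_d(B) is FA d modulo this ideal.\<close>
inductive_set bicomm_ideal :: "nat \<Rightarrow> (btree \<Rightarrow> 'k::field) set" for d where
  id1: "\<lbrakk>u \<in> FA d; v \<in> FA d; w \<in> FA d\<rbrakk> \<Longrightarrow>
          fminus (fmult (fmult u v) w) (fmult (fmult u w) v) \<in> bicomm_ideal d"
| id2: "\<lbrakk>u \<in> FA d; v \<in> FA d; w \<in> FA d\<rbrakk> \<Longrightarrow>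
          fminus (fmult u (fmult v w)) (fmult v (fmult u w)) \<in> bicomm_ideal d"
| zero: "fzero \<in> bicomm_ideal d"
| add: "\<lbrakk>f \<in> bicomm_ideal d; g \<in> bicomm_ideal d\<rbrakk> \<Longrightarrow> fadd f g \<in> bicomm_ideal d"
| smul: "f \<in> bicomm_ideal d \<Longrightarrow> fsmul c f \<in> bicomm_ideal d"
| lmult: "\<lbrakk>f \<in> bicomm_ideal d; a \<in> FA d\<rbrakk> \<Longrightarrow> fmult a f \<in> bicomm_ideal d"
| rmult: "\<lbrakk>f \<in> bicomm_ideal d; a \<in> FA d\<rbrakk> \<Longrightarrow> fmult f a \<in> bicomm_ideal d"

text \<open>The square of the free nonassociative algebra: the span of all products.
  Its image in the quotient is F_d(B)^2, i.e. F_d(B)^2 = FA_sq d / (FA_sq d \<inter> bicomm_ideal d).\<close>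
inductive_set FA_sq :: "nat \<Rightarrow> (btree \<Rightarrow> 'k::field) set" for d where
  prod: "\<lbrakk>u \<in> FA d; v \<in> FA d\<rbrakk> \<Longrightarrow> fmult u v \<in> FA_sq d"
| zero: "fzero \<in> FA_sq d"
| add: "\<lbrakk>f \<in> FA_sq d; g \<in> FA_sq d\<rbrakk> \<Longrightarrow> fadd f g \<in> FA_sq d"
| smul: "f \<in> FA_sq d \<Longrightarrow> fsmul c f \<in> FA_sq d"

definition FA_homog :: "(nat \<Rightarrow> nat) \<Rightarrow> (btree \<Rightarrow> 'k::field) \<Rightarrow> bool" where
  "FA_homog \<alpha> f \<longleftrightarrow> (\<forall>t. f t \<noteq> 0 \<longrightarrow> tdeg t = \<alpha>)"

definition mat_mult :: "nat \<Rightarrow> (nat \<Rightarrow> nat \<Rightarrow> 'k::field) \<Rightarrow> (nat \<Rightarrow> nat \<Rightarrow> 'k) \<Rightarrow> nat \<Rightarrow> nat \<Rightarrow> 'k" where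
  "mat_mult d g h = (\<lambda>i j. \<Sum>k<d. g i k * h k j)"

definition GL :: "nat \<Rightarrow> (nat \<Rightarrow> nat \<Rightarrow> 'k::field) set" where
  "GL d = {g. \<exists>h. \<forall>i<d. \<forall>j<d.
      mat_mult d g h i j = (if i = j then 1 else 0) \<and>
      mat_mult d h g i j = (if i = j then 1 else 0)}"

text \<open>Action on generators: g x_i = \<Sum>_j g_(j,i) x_j, extended to algebra endomorphisms.\<close>
definition fsum :: "'a set \<Rightarrow> ('a \<Rightarrow> btree \<Rightarrow> 'k::field) \<Rightarrow> btree \<Rightarrow> 'k" where
  "fsum A F = (\<lambda>t. \<Sum>a\<in>A. F a t)"

definition fbasis :: "btree \<Rightarrow> btree \<Rightarrow> 'k::field" where
  "fbasis s = (\<lambda>t. if t = s then 1 else 0)"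

fun act_tree :: "nat \<Rightarrow> (nat \<Rightarrow> nat \<Rightarrow> 'k::field) \<Rightarrow> btree \<Rightarrow> btree \<Rightarrow> 'k" where
  "act_tree d g (Leaf i) = fsum {..<d} (\<lambda>j. fsmul (g j i) (fbasis (Leaf j)))"
| "act_tree d g (Node a b) = fmult (act_tree d g a) (act_tree d g b)"

definition act_FA :: "nat \<Rightarrow> (nat \<Rightarrow> nat \<Rightarrow> 'k::field) \<Rightarrow> (btree \<Rightarrow> 'k) \<Rightarrow> btree \<Rightarrow> 'k" where
  "act_FA d g f = fsum {t. f t \<noteq> 0} (\<lambda>t. fsmul (f t) (act_tree d g t))"

section \<open>Polynomials in y_i (= Inl i) and z_i (= Inr i)\<close>

type_synonym 'k pol = "((nat + nat) \<Rightarrow>\<^sub>0 nat) \<Rightarrow>\<^sub>0 'k"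

definition Yv :: "nat \<Rightarrow> 'k::field pol" where
  "Yv i = Poly_Mapping.single (Poly_Mapping.single (Inl i) 1) 1"

definition Zv :: "nat \<Rightarrow> 'k::field pol" where
  "Zv i = Poly_Mapping.single (Poly_Mapping.single (Inr i) 1) 1"

definition psmul :: "'k::field \<Rightarrow> 'k pol \<Rightarrow> 'k pol" where
  "psmul c p = Poly_Mapping.map (\<lambda>x. c * x) p"

definition mdeg :: "((nat + nat) \<Rightarrow>\<^sub>0 nat) \<Rightarrow> nat \<Rightarrow> nat" where
  "mdeg m = (\<lambda>i. Poly_Mapping.lookup m (Inl i) + Poly_Mapping.lookup m (Inr i))"

definition ydeg :: "((nat + nat) \<Rightarrow>\<^sub>0 nat) \<Rightarrow> nat" where
  "ydeg m = (\<Sum>v\<in>Poly_Mapping.keys m. case v of Inl _ \<Rightarrow> Poly_Mapping.lookup m v | Inr _ \<Rightarrow> 0)"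

definition zdeg :: "((nat + nat) \<Rightarrow>\<^sub>0 nat) \<Rightarrow> nat" where
  "zdeg m = (\<Sum>v\<in>Poly_Mapping.keys m. case v of Inl _ \<Rightarrow> 0 | Inr _ \<Rightarrow> Poly_Mapping.lookup m v)"

definition mono_vars_ok :: "nat \<Rightarrow> ((nat + nat) \<Rightarrow>\<^sub>0 nat) \<Rightarrow> bool" where
  "mono_vars_ok d m \<longleftrightarrow> (\<forall>v\<in>Poly_Mapping.keys m. case v of Inl i \<Rightarrow> i < d | Inr i \<Rightarrow> i < d)"

text \<open>\<omega>(K[Y_d]) \<otimes> \<omega>(K[Z_d]), realised inside K[Y_d] \<otimes> K[Z_d] = K[Y_d,Z_d]:
  the span of monomials y^\<beta> z^\<gamma> with \<beta> \<noteq> 0 and \<gamma> \<noteq> 0.\<close>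
definition omega_tensor :: "nat \<Rightarrow> 'k::field pol set" where
  "omega_tensor d = {p. \<forall>m\<in>Poly_Mapping.keys p. mono_vars_ok d m \<and> ydeg m \<ge> 1 \<and> zdeg m \<ge> 1}"

definition pol_homog :: "(nat \<Rightarrow> nat) \<Rightarrow> 'k::field pol \<Rightarrow> bool" where
  "pol_homog \<alpha> p \<longleftrightarrow> (\<forall>m\<in>Poly_Mapping.keys p. mdeg m = \<alpha>)"

text \<open>W_d(p) \<otimes> W_d(q), realised as the bihomogeneous polynomials of degree p in Y_d
  and degree q in Z_d (W_d(p) = homogeneous polynomials of degree p).\<close>
definition Wtensor :: "nat \<Rightarrow> nat \<Rightarrow> nat \<Rightarrow> 'k::field pol set" where
  "Wtensor d p q = {P. \<forall>m\<in>Poly_Mapping.keys P. mono_vars_ok d m \<and> ydeg m = p \<and> zdeg m = q}"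

definition Wsum :: "nat \<Rightarrow> 'k::field pol set" where
  "Wsum d = {P. \<exists>S F. finite S \<and> S \<subseteq> {(p,q). p \<ge> 1 \<and> q \<ge> 1}
                  \<and> (\<forall>pq\<in>S. F pq \<in> Wtensor d (fst pq) (snd pq)) \<and> P = (\<Sum>pq\<in>S. F pq)}"

definition lin_var :: "nat \<Rightarrow> (nat \<Rightarrow> nat \<Rightarrow> 'k::field) \<Rightarrow> nat + nat \<Rightarrow> 'k pol" where
  "lin_var d g v = (case v of
      Inl i \<Rightarrow> (\<Sum>j<d. psmul (g j i) (Yv j))
    | Inr i \<Rightarrow> (\<Sum>j<d. psmul (g j i) (Zv j)))"

definition act_pol :: "nat \<Rightarrow> (nat \<Rightarrow> nat \<Rightarrow> 'k::field) \<Rightarrow> 'k pol \<Rightarrow> 'k pol" where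
  "act_pol d g P = (\<Sum>m\<in>Poly_Mapping.keys P. psmul (Poly_Mapping.lookup P m) (\<Prod>v\<in>Poly_Mapping.keys m. lin_var d g v ^ Poly_Mapping.lookup m v))"

text \<open>phi : FA_sq d \<rightarrow> V is K-linear, maps onto V, and has kernel exactly the part of
  the bicommutative T-ideal in FA_sq d; i.e. phi induces a linear isomorphism
  F_d(B)^2 = FA_sq d / (FA_sq d \<inter> bicomm_ideal d) \<cong> V.\<close>
definition induces_iso :: "nat \<Rightarrow> ((btree \<Rightarrow> 'k::field) \<Rightarrow> 'k pol) \<Rightarrow> 'k pol set \<Rightarrow> bool" where
  "induces_iso d \<phi> V \<longleftrightarrow>
     (\<forall>f\<in>FA_sq d. \<forall>g\<in>FA_sq d. \<phi> (fadd f g) = \<phi> f + \<phi> g) \<and>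
     (\<forall>f\<in>FA_sq d. \<forall>c. \<phi> (fsmul c f) = psmul c (\<phi> f)) \<and>
     \<phi> ` FA_sq d = V \<and>
     (\<forall>f\<in>FA_sq d. \<phi> f = 0 \<longleftrightarrow> f \<in> bicomm_ideal d)"

end

theory Submission
  imports Defs
begin

lemma psmul_conv: "psmul c p = Poly_Mapping.single 0 c * p"
  unfolding psmul_def by (metis mult_map_scale_conv_mult)

fun mon :: "bool \<Rightarrow> btree \<Rightarrow> (nat+nat) \<Rightarrow>\<^sub>0 nat" where
  "mon s (Leaf i) = Poly_Mapping.single (if s then Inl i else Inr i) 1"
| "mon s (Node a b) = mon True a + mon False b"

definition supp :: "(btree \<Rightarrow> 'k::zero) \<Rightarrow> btree set" where
  "supp f = {t. f t \<noteq> 0}"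

definition phi :: "bool \<Rightarrow> (btree \<Rightarrow> 'k::field) \<Rightarrow> 'k pol" where
  "phi s f = (\<Sum>t\<in>supp f. Poly_Mapping.single (mon s t) (f t))"

lemma phi_superset:
  assumes "finite S" "supp f \<subseteq> S"
  shows "phi s f = (\<Sum>t\<in>S. Poly_Mapping.single (mon s t) (f t))"
  unfolding phi_def
  by (rule sum.mono_neutral_left) (use assms in \<open>auto simp: supp_def\<close>)

lemma supp_fadd: "supp (fadd f g) \<subseteq> supp f \<union> supp g"
  by (auto simp: supp_def fadd_def)
lemma supp_fminus: "supp (fminus f g) \<subseteq> supp f \<union> supp g"
  by (auto simp: supp_def fminus_def)
lemma supp_fsmul: "supp (fsmul c f) \<subseteq> supp f"
  by (auto simp: supp_def fsmul_def)
lemma supp_fzero[simp]: "supp fzero = {}"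
  by (auto simp: supp_def fzero_def)
lemma supp_fmult: "supp (fmult u v) \<subseteq> (\<lambda>(a,b). Node a b) ` (supp u \<times> supp v)"
proof
  fix t assume "t \<in> supp (fmult u v)"
  then obtain a b where "t = Node a b" "u a \<noteq> 0" "v b \<noteq> 0"
    by (cases t) (auto simp: supp_def fmult_def)
  then show "t \<in> (\<lambda>(a,b). Node a b) ` (supp u \<times> supp v)"
    by (auto simp: supp_def image_iff)
qed
lemma supp_fbasis[simp]: "supp (fbasis t) = {t}"
  by (auto simp: supp_def fbasis_def)

lemma fin_fadd: "finite (supp f) \<Longrightarrow> finite (supp g) \<Longrightarrow> finite (supp (fadd f g))"
  by (meson finite_UnI finite_subset supp_fadd)
lemma fin_fminus: "finite (supp f) \<Longrightarrow> finite (supp g) \<Longrightarrow> finite (supp (fminus f g))"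
  by (meson finite_UnI finite_subset supp_fminus)
lemma fin_fsmul: "finite (supp f) \<Longrightarrow> finite (supp (fsmul c f))"
  by (meson finite_subset supp_fsmul)
lemma fin_fmult: "finite (supp u) \<Longrightarrow> finite (supp v) \<Longrightarrow> finite (supp (fmult u v))"
  by (rule finite_subset[OF supp_fmult]) auto

lemma phi_fadd:
  assumes "finite (supp f)" "finite (supp g)"
  shows "phi s (fadd f g) = phi s f + phi s g"
proof -
  let ?S = "supp f \<union> supp g"
  have "phi s (fadd f g) = (\<Sum>t\<in>?S. Poly_Mapping.single (mon s t) (fadd f g t))"
    by (rule phi_superset) (use assms supp_fadd in auto)
  also have "\<dots> = (\<Sum>t\<in>?S. Poly_Mapping.single (mon s t) (f t)) + (\<Sum>t\<in>?S. Poly_Mapping.single (mon s t) (g t))"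
    by (simp add: fadd_def single_add sum.distrib)
  also have "\<dots> = phi s f + phi s g"
    using assms by (simp add: phi_superset[of ?S f s] phi_superset[of ?S g s])
  finally show ?thesis .
qed

lemma single_diff': "Poly_Mapping.single k (a - b) = Poly_Mapping.single k a - Poly_Mapping.single k (b::'a::ab_group_add)"
  by (rule poly_mapping_eqI) (simp add: lookup_single lookup_minus when_def)

lemma phi_fminus:
  assumes "finite (supp f)" "finite (supp g)"
  shows "phi s (fminus f g) = phi s f - phi s g"
proof -
  let ?S = "supp f \<union> supp g"
  have "phi s (fminus f g) = (\<Sum>t\<in>?S. Poly_Mapping.single (mon s t) (fminus f g t))"
    by (rule phi_superset) (use assms supp_fminus in auto)
  also have "\<dots> = (\<Sum>t\<in>?S. Poly_Mapping.single (mon s t) (f t)) - (\<Sum>t\<in>?S. Poly_Mapping.single (mon s t) (g t))"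
    by (simp add: fminus_def single_diff' sum_subtractf)
  also have "\<dots> = phi s f - phi s g"
    using assms by (simp add: phi_superset[of ?S f s] phi_superset[of ?S g s])
  finally show ?thesis .
qed

lemma phi_fsmul:
  assumes "finite (supp f)"
  shows "phi s (fsmul c f) = psmul c (phi s f)"
proof -
  have "phi s (fsmul c f) = (\<Sum>t\<in>supp f. Poly_Mapping.single (mon s t) (fsmul c f t))"
    by (rule phi_superset) (use assms supp_fsmul in auto)
  also have "\<dots> = Poly_Mapping.single 0 c * phi s f"
    by (simp add: phi_def sum_distrib_left mult_single fsmul_def)
  finally show ?thesis by (simp add: psmul_conv)
qed

lemma phi_fzero[simp]: "phi s fzero = 0"
  by (simp add: phi_def)

lemma phi_fbasis[simp]: "phi s (fbasis t) = Poly_Mapping.single (mon s t) 1"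
  unfolding phi_def supp_fbasis by (simp add: fbasis_def)

lemma phi_fmult:
  assumes "finite (supp u)" "finite (supp v)"
  shows "phi s (fmult u v) = phi True u * phi False v"
proof -
  let ?P = "supp u \<times> supp v"
  have inj: "inj_on (\<lambda>(a,b). Node a b) ?P" by (auto simp: inj_on_def)
  have "phi s (fmult u v) = (\<Sum>t\<in>(\<lambda>(a,b). Node a b) ` ?P. Poly_Mapping.single (mon s t) (fmult u v t))"
    by (rule phi_superset) (use assms supp_fmult in auto)
  also have "\<dots> = (\<Sum>p\<in>?P. Poly_Mapping.single (mon s (case p of (a,b) \<Rightarrow> Node a b)) (fmult u v (case p of (a,b) \<Rightarrow> Node a b)))"
    by (subst sum.reindex[OF inj]) (simp add: comp_def)
  also have "\<dots> = (\<Sum>(a,b)\<in>?P. Poly_Mapping.single (mon True a) (u a) * Poly_Mapping.single (mon False b) (v b))"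
    by (rule sum.cong) (auto simp: fmult_def mult_single)
  also have "\<dots> = (\<Sum>a\<in>supp u. \<Sum>b\<in>supp v. Poly_Mapping.single (mon True a) (u a) * Poly_Mapping.single (mon False b) (v b))"
    by (simp add: sum.cartesian_product)
  also have "\<dots> = phi True u * phi False v"
    by (simp add: phi_def sum_product)
  finally show ?thesis .
qed

lemma fsum_insert: "finite A \<Longrightarrow> a \<notin> A \<Longrightarrow> fsum (insert a A) F = fadd (F a) (fsum A F)"
  by (auto simp: fsum_def fadd_def)
lemma fsum_empty: "fsum {} F = fzero"
  by (auto simp: fsum_def fzero_def)

lemma fin_fsum: "finite A \<Longrightarrow> (\<And>a. a \<in> A \<Longrightarrow> finite (supp (F a))) \<Longrightarrow> finite (supp (fsum A F))"
  by (induction A rule: finite_induct) (auto simp: fsum_empty fsum_insert intro: fin_fadd)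

lemma phi_fsum: "finite A \<Longrightarrow> (\<And>a. a \<in> A \<Longrightarrow> finite (supp (F a))) \<Longrightarrow>
   phi s (fsum A F) = (\<Sum>a\<in>A. phi s (F a))"
  by (induction A rule: finite_induct) (auto simp: fsum_empty fsum_insert phi_fadd fin_fsum)

definition W :: "nat \<Rightarrow> btree \<Rightarrow> bool" where "W d t \<longleftrightarrow> leaves t \<subseteq> {..<d}"

lemma W_Node[simp]: "W d (Node a b) \<longleftrightarrow> W d a \<and> W d b"
  by (auto simp: W_def)
lemma W_Leaf[simp]: "W d (Leaf i) \<longleftrightarrow> i < d"
  by (auto simp: W_def)

lemma FA_iff: "f \<in> FA d \<longleftrightarrow> finite (supp f) \<and> (\<forall>t\<in>supp f. W d t)"
  by (auto simp: FA_def supp_def W_def)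

lemma fbasis_FA: "W d t \<Longrightarrow> fbasis t \<in> FA d"
  by (simp add: FA_iff)

lemma fbasis_Node: "fbasis (Node a b) = fmult (fbasis a) (fbasis b)"
  by (rule ext) (auto simp: fbasis_def fmult_def split: btree.splits)

lemma ideal_phi: "f \<in> bicomm_ideal d \<Longrightarrow> finite (supp f) \<and> phi True f = 0 \<and> phi False f = 0"
proof (induction rule: bicomm_ideal.induct)
  case (id1 u v w)
  then have f: "finite (supp u)" "finite (supp v)" "finite (supp w)" by (auto simp: FA_iff)
  show ?case using f
    by (simp add: fin_fmult fin_fminus phi_fminus phi_fmult mult_ac)
next
  case (id2 u v w)
  then have f: "finite (supp u)" "finite (supp v)" "finite (supp w)" by (auto simp: FA_iff)
  show ?case using f
    by (simp add: fin_fmult fin_fminus phi_fminus phi_fmult mult_ac)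
next
  case zero then show ?case by simp
next
  case (add f g) then show ?case by (simp add: fin_fadd phi_fadd)
next
  case (smul f c) then show ?case by (simp add: fin_fsmul phi_fsmul psmul_conv)
next
  case (lmult f a) then show ?case by (simp add: FA_iff fin_fmult phi_fmult)
next
  case (rmult f a) then show ?case by (simp add: FA_iff fin_fmult phi_fmult)
qed

definition isNode :: "btree \<Rightarrow> bool" where "isNode t \<longleftrightarrow> (\<exists>a b. t = Node a b)"
lemma isNode_simps[simp]: "isNode (Node a b)" "\<not> isNode (Leaf i)"
  by (auto simp: isNode_def)

lemma FA_sq_props: "f \<in> FA_sq d \<Longrightarrow> finite (supp f) \<and> (\<forall>t\<in>supp f. isNode t \<and> W d t)"
proof (induction rule: FA_sq.induct)
  case (prod u v)
  then show ?case using supp_fmult[of u v] by (auto simp: FA_iff fin_fmult)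
next
  case zero then show ?case by simp
next
  case (add f g) then show ?case using supp_fadd[of f g] by (auto simp: fin_fadd)
next
  case (smul f c) then show ?case using supp_fsmul[of c f] by (auto simp: fin_fsmul)
qed

lemma mon_Node_eq: "isNode t \<Longrightarrow> mon True t = mon False t"
  by (auto simp: isNode_def)

lemma phi_TF: "(\<forall>t\<in>supp f. isNode t) \<Longrightarrow> phi True f = phi False f"
  unfolding phi_def by (rule sum.cong) (auto simp: mon_Node_eq)

definition teq :: "'k::field itself \<Rightarrow> nat \<Rightarrow> btree \<Rightarrow> btree \<Rightarrow> bool" where
  "teq K d t s \<longleftrightarrow> fminus (fbasis t) (fbasis s) \<in> (bicomm_ideal d :: (btree \<Rightarrow> 'k) set)"

lemma teq_refl:
  fixes K :: "'k::field itself"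
  shows "teq K d t t"
proof -
  have "fminus (fbasis t) (fbasis t) = (fzero :: btree \<Rightarrow> 'k::field)"
    by (auto simp: fminus_def fzero_def)
  then show ?thesis unfolding teq_def by (simp add: bicomm_ideal.zero)
qed

lemma teq_sym:
  fixes K :: "'k::field itself"
  shows "teq K d t s \<Longrightarrow> teq K d s t"
proof -
  assume "teq K d t s"
  then have "fsmul (-1) (fminus (fbasis t) (fbasis s)) \<in> (bicomm_ideal d :: (btree \<Rightarrow> 'k) set)"
    unfolding teq_def by (rule bicomm_ideal.smul)
  moreover have "fsmul (-1) (fminus (fbasis t) (fbasis s)) = (fminus (fbasis s) (fbasis t) :: btree \<Rightarrow> 'k)"
    by (auto simp: fsmul_def fminus_def)
  ultimately show ?thesis unfolding teq_def by simp
qed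

lemma teq_trans:
  fixes K :: "'k::field itself"
  shows "teq K d t s \<Longrightarrow> teq K d s r \<Longrightarrow> teq K d t r"
proof -
  assume a: "teq K d t s" "teq K d s r"
  then have "fadd (fminus (fbasis t) (fbasis s)) (fminus (fbasis s) (fbasis r)) \<in> (bicomm_ideal d :: (btree \<Rightarrow> 'k) set)"
    unfolding teq_def by (rule bicomm_ideal.add)
  moreover have "fadd (fminus (fbasis t) (fbasis s)) (fminus (fbasis s) (fbasis r)) = (fminus (fbasis t) (fbasis r) :: btree \<Rightarrow> 'k)"
    by (auto simp: fadd_def fminus_def)
  ultimately show ?thesis unfolding teq_def by simp
qed

lemma teq_congL:
  fixes K :: "'k::field itself"
  shows "teq K d a a' \<Longrightarrow> W d b \<Longrightarrow> teq K d (Node a b) (Node a' b)"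
proof -
  assume a: "teq K d a a'" "W d b"
  then have "fmult (fminus (fbasis a) (fbasis a')) (fbasis b) \<in> (bicomm_ideal d :: (btree \<Rightarrow> 'k) set)"
    unfolding teq_def by (intro bicomm_ideal.rmult fbasis_FA)
  moreover have "fmult (fminus (fbasis a) (fbasis a')) (fbasis b) = (fminus (fbasis (Node a b)) (fbasis (Node a' b)) :: btree \<Rightarrow> 'k)"
    by (rule ext) (auto simp: fbasis_def fmult_def fminus_def split: btree.splits)
  ultimately show ?thesis unfolding teq_def by simp
qed

lemma teq_congR:
  fixes K :: "'k::field itself"
  shows "teq K d a a' \<Longrightarrow> W d b \<Longrightarrow> teq K d (Node b a) (Node b a')"
proof -
  assume a: "teq K d a a'" "W d b"
  then have "fmult (fbasis b) (fminus (fbasis a) (fbasis a')) \<in> (bicomm_ideal d :: (btree \<Rightarrow> 'k) set)"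
    unfolding teq_def by (intro bicomm_ideal.lmult fbasis_FA)
  moreover have "fmult (fbasis b) (fminus (fbasis a) (fbasis a')) = (fminus (fbasis (Node b a)) (fbasis (Node b a')) :: btree \<Rightarrow> 'k)"
    by (rule ext) (auto simp: fbasis_def fmult_def fminus_def split: btree.splits)
  ultimately show ?thesis unfolding teq_def by simp
qed

lemma teq_I1:
  fixes K :: "'k::field itself"
  shows "W d u \<Longrightarrow> W d v \<Longrightarrow> W d w \<Longrightarrow> teq K d (Node (Node u v) w) (Node (Node u w) v)"
  unfolding teq_def fbasis_Node by (intro bicomm_ideal.id1 fbasis_FA)

lemma teq_I2:
  fixes K :: "'k::field itself"
  shows "W d u \<Longrightarrow> W d v \<Longrightarrow> W d w \<Longrightarrow> teq K d (Node u (Node v w)) (Node v (Node u w))"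
  unfolding teq_def fbasis_Node by (intro bicomm_ideal.id2 fbasis_FA)

lemma teq_Q:
  fixes K :: "'k::field itself"
  assumes "W d a" "W d b" "W d c" "W d e"
  shows "teq K d (Node (Node a b) (Node c e)) (Node (Node a e) (Node c b))"
proof -
  have 1: "teq K d (Node (Node a b) (Node c e)) (Node c (Node (Node a b) e))"
    using assms by (intro teq_I2) auto
  have 2: "teq K d (Node c (Node (Node a b) e)) (Node c (Node (Node a e) b))"
    using assms by (intro teq_congR teq_I1) auto
  have 3: "teq K d (Node c (Node (Node a e) b)) (Node (Node a e) (Node c b))"
    using assms by (intro teq_I2) auto
  show ?thesis using 1 2 3 teq_trans by blast
qed

lemma teq_Q':
  fixes K :: "'k::field itself"
  assumes "W d a" "W d b" "W d c" "W d e"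
  shows "teq K d (Node (Node a b) (Node c e)) (Node (Node c b) (Node a e))"
proof -
  have 1: "teq K d (Node (Node a b) (Node c e)) (Node (Node a (Node c e)) b)"
    using assms by (intro teq_I1) auto
  have 2: "teq K d (Node (Node a (Node c e)) b) (Node (Node c (Node a e)) b)"
    using assms by (intro teq_congL teq_I2) auto
  have 3: "teq K d (Node (Node c (Node a e)) b) (Node (Node c b) (Node a e))"
    using assms by (intro teq_I1) auto
  show ?thesis using 1 2 3 teq_trans by blast
qed

lemma teq_comm:
  fixes K :: "'k::field itself"
  assumes "W d a" "W d b" "W d c" "W d e"
  shows "teq K d (Node (Node a e) (Node c b)) (Node (Node c b) (Node a e))"
  using teq_Q[OF assms, of K] teq_Q'[OF assms, of K] teq_sym teq_trans by blast

lemma teq_commN: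
  fixes K :: "'k::field itself"
  assumes "isNode p" "isNode q" "W d p" "W d q"
  shows "teq K d (Node p q) (Node q p)"
  using assms teq_comm by (auto simp: isNode_def)

lemma teq_SW:
  fixes K :: "'k::field itself"
  assumes "isNode u" "W d x" "W d u" "W d y"
  shows "teq K d (Node x (Node u y)) (Node (Node x u) y)"
proof -
  have 1: "teq K d (Node x (Node u y)) (Node u (Node x y))"
    using assms by (intro teq_I2) auto
  have 2: "teq K d (Node u (Node x y)) (Node (Node x y) u)"
    using assms by (intro teq_commN) auto
  have 3: "teq K d (Node (Node x u) y) (Node (Node x y) u)"
    using assms by (intro teq_I1) auto
  show ?thesis using 1 2 3 teq_sym teq_trans by blast
qed

lemma ydeg_superset: "finite K \<Longrightarrow> Poly_Mapping.keys m \<subseteq> K \<Longrightarrow>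
  ydeg m = (\<Sum>v\<in>K. case v of Inl _ \<Rightarrow> Poly_Mapping.lookup m v | Inr _ \<Rightarrow> 0)"
  unfolding ydeg_def
  by (rule sum.mono_neutral_left) (auto simp: in_keys_iff split: sum.splits)

lemma zdeg_superset: "finite K \<Longrightarrow> Poly_Mapping.keys m \<subseteq> K \<Longrightarrow>
  zdeg m = (\<Sum>v\<in>K. case v of Inl _ \<Rightarrow> 0 | Inr _ \<Rightarrow> Poly_Mapping.lookup m v)"
  unfolding zdeg_def
  by (rule sum.mono_neutral_left) (auto simp: in_keys_iff split: sum.splits)

lemma ydeg_add[simp]: "ydeg (m + n) = ydeg m + ydeg n"
proof -
  let ?K = "Poly_Mapping.keys m \<union> Poly_Mapping.keys n"
  have k: "Poly_Mapping.keys (m + n) \<subseteq> ?K" by (rule keys_add)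
  have "ydeg (m + n) = (\<Sum>v\<in>?K. case v of Inl _ \<Rightarrow> Poly_Mapping.lookup (m+n) v | Inr _ \<Rightarrow> 0)"
    by (rule ydeg_superset) (use k in auto)
  also have "\<dots> = (\<Sum>v\<in>?K. (case v of Inl _ \<Rightarrow> Poly_Mapping.lookup m v | Inr _ \<Rightarrow> 0) + (case v of Inl _ \<Rightarrow> Poly_Mapping.lookup n v | Inr _ \<Rightarrow> 0))"
    by (rule sum.cong) (auto simp: lookup_add split: sum.splits)
  also have "\<dots> = ydeg m + ydeg n"
    by (simp add: sum.distrib ydeg_superset[of ?K m] ydeg_superset[of ?K n])
  finally show ?thesis .
qed

lemma zdeg_add[simp]: "zdeg (m + n) = zdeg m + zdeg n"
proof -
  let ?K = "Poly_Mapping.keys m \<union> Poly_Mapping.keys n"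
  have k: "Poly_Mapping.keys (m + n) \<subseteq> ?K" by (rule keys_add)
  have "zdeg (m + n) = (\<Sum>v\<in>?K. case v of Inl _ \<Rightarrow> 0 | Inr _ \<Rightarrow> Poly_Mapping.lookup (m+n) v)"
    by (rule zdeg_superset) (use k in auto)
  also have "\<dots> = (\<Sum>v\<in>?K. (case v of Inl _ \<Rightarrow> 0 | Inr _ \<Rightarrow> Poly_Mapping.lookup m v) + (case v of Inl _ \<Rightarrow> 0 | Inr _ \<Rightarrow> Poly_Mapping.lookup n v))"
    by (rule sum.cong) (auto simp: lookup_add split: sum.splits)
  also have "\<dots> = zdeg m + zdeg n"
    by (simp add: sum.distrib zdeg_superset[of ?K m] zdeg_superset[of ?K n])
  finally show ?thesis .
qed

lemma ydeg_single[simp]: "ydeg (Poly_Mapping.single (Inl i) 1) = 1" "ydeg (Poly_Mapping.single (Inr i) 1) = 0"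
  by (simp_all add: ydeg_def)
lemma zdeg_single[simp]: "zdeg (Poly_Mapping.single (Inl i) 1) = 0" "zdeg (Poly_Mapping.single (Inr i) 1) = 1"
  by (simp_all add: zdeg_def)
lemma ydeg_single'[simp]: "ydeg (Poly_Mapping.single (Inl i) (Suc 0)) = 1" "ydeg (Poly_Mapping.single (Inr i) (Suc 0)) = 0"
  by (simp_all add: ydeg_def)
lemma zdeg_single'[simp]: "zdeg (Poly_Mapping.single (Inl i) (Suc 0)) = 0" "zdeg (Poly_Mapping.single (Inr i) (Suc 0)) = 1"
  by (simp_all add: zdeg_def)

lemma ydeg_pos: "ydeg m > 0 \<Longrightarrow> \<exists>i. Poly_Mapping.lookup m (Inl i) > 0"
proof (rule ccontr)
  assume "ydeg m > 0" "\<not> (\<exists>i. Poly_Mapping.lookup m (Inl i) > 0)"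
  then have "ydeg m = 0" unfolding ydeg_def by (intro sum.neutral) (auto split: sum.splits)
  with \<open>ydeg m > 0\<close> show False by simp
qed

lemma zdeg_pos: "zdeg m > 0 \<Longrightarrow> \<exists>i. Poly_Mapping.lookup m (Inr i) > 0"
proof (rule ccontr)
  assume "zdeg m > 0" "\<not> (\<exists>i. Poly_Mapping.lookup m (Inr i) > 0)"
  then have "zdeg m = 0" unfolding zdeg_def by (intro sum.neutral) (auto split: sum.splits)
  with \<open>zdeg m > 0\<close> show False by simp
qed

fun nl :: "btree \<Rightarrow> nat" where
  "nl (Leaf i) = 1"
| "nl (Node a b) = nl a + nl b"

lemma nl_pos: "nl t > 0"
  by (induction t) auto

lemma Ymon_Leaf[simp]: "ydeg (mon s (Leaf i)) = (if s then 1 else 0)"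
  by auto
lemma Zmon_Leaf[simp]: "zdeg (mon s (Leaf i)) = (if s then 0 else 1)"
  by auto
lemma lookup_mon_Leaf[simp]: "Poly_Mapping.lookup (mon s (Leaf i)) v = (if v = (if s then Inl i else Inr i) then 1 else 0)"
  by (simp add: lookup_single)
lemma lookup_mon_Node[simp]: "Poly_Mapping.lookup (mon s (Node a b)) v = Poly_Mapping.lookup (mon True a) v + Poly_Mapping.lookup (mon False b) v"
  by (simp add: lookup_add)

lemma YZ_nl: "ydeg (mon s t) + zdeg (mon s t) = nl t"
proof (induction t arbitrary: s)
  case (Leaf x) then show ?case by auto
next
  case (Node t1 t2) then show ?case by (metis add.assoc add.left_commute mon.simps(2) ydeg_add zdeg_add nl.simps(2))
qed

lemma Y_pos: "ydeg (mon True t) \<ge> 1"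
  by (induction t) auto
lemma Z_pos: "zdeg (mon False t) \<ge> 1"
  by (induction t) auto

lemma YF_zero: "ydeg (mon False t) = 0 \<longleftrightarrow> \<not> isNode t"
proof (cases t)
  case (Node a b) then show ?thesis using Y_pos[of a] by simp
qed simp
lemma ZT_zero: "zdeg (mon True t) = 0 \<longleftrightarrow> \<not> isNode t"
proof (cases t)
  case (Node a b) then show ?thesis using Z_pos[of b] by simp
qed simp

lemma keys_mon: "v \<in> Poly_Mapping.keys (mon s t) \<Longrightarrow> (case v of Inl j \<Rightarrow> j | Inr j \<Rightarrow> j) \<in> leaves t"
proof (induction t arbitrary: s)
  case (Leaf x) then show ?case by (auto split: if_splits)
next
  case (Node t1 t2)
  then have "v \<in> Poly_Mapping.keys (mon True t1) \<or> v \<in> Poly_Mapping.keys (mon False t2)"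
    using keys_add[of "mon True t1" "mon False t2"] by auto
  then show ?case using Node.IH by auto
qed

lemma YF_pos: "ydeg (mon False t) \<ge> 1 \<Longrightarrow> isNode t"
  using YF_zero[of t] by linarith
lemma ZT_pos: "zdeg (mon True t) \<ge> 1 \<Longrightarrow> isNode t"
  using ZT_zero[of t] by linarith

lemma teq_mon:
  fixes K :: "'k::field itself"
  shows "teq K d t s \<Longrightarrow> mon r t = mon r s"
proof -
  assume "teq K d t s"
  then have "phi r (fminus (fbasis t) (fbasis s) :: btree \<Rightarrow> 'k) = 0"
    unfolding teq_def using ideal_phi by (cases r) fastforce+
  then have "Poly_Mapping.single (mon r t) (1::'k) = Poly_Mapping.single (mon r s) 1"
    by (simp add: phi_fminus)
  then show ?thesis
    by (metis lookup_single_eq lookup_single_not_eq one_neq_zero)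
qed

lemma teq_nl:
  fixes K :: "'k::field itself"
  shows "teq K d t s \<Longrightarrow> nl t = nl s"
  by (metis YZ_nl teq_mon)

declare lookup_add[simp] lookup_single[simp] when_def[simp]

lemma isNode_cases: "isNode t \<Longrightarrow> (\<And>a b. t = Node a b \<Longrightarrow> P) \<Longrightarrow> P"
  by (auto simp: isNode_def)

lemma notNode_Leaf: "\<not> isNode t \<Longrightarrow> \<exists>i. t = Leaf i"
  by (cases t) auto

lemma EL:
  fixes K :: "'k::field itself"
  shows "nl t = n \<Longrightarrow> isNode t \<Longrightarrow> W d t \<Longrightarrow> Poly_Mapping.lookup (mon True t) (Inl i) > 0 \<Longrightarrow>
    ydeg (mon True t) \<ge> 2 \<Longrightarrow> \<exists>t'. W d t' \<and> teq K d t (Node (Leaf i) t')"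
proof (induction n arbitrary: t rule: less_induct)
  case (less n t)
  note IH = less.IH
  have iW: "i < d" proof -
    have "Inl i \<in> Poly_Mapping.keys (mon True t)" using less.prems(4) by (simp add: in_keys_iff)
    then show ?thesis using less.prems(3) keys_mon[of "Inl i" True t] by (force simp: W_def)
  qed
  have LN: "\<exists>t'. W d t' \<and> teq K d (Node a b) (Node (Leaf i) t')"
    if a: "isNode a" "nl (Node a b) = n" "W d a" "W d b" "Poly_Mapping.lookup (mon True a) (Inl i) > 0"
      "ydeg (mon True (Node a b)) \<ge> 2" for a b
  proof (cases "ydeg (mon True a) \<ge> 2")
    case True
    have "nl a < n" using a(2) nl_pos[of b] by simp
    from IH[OF this refl a(1) a(3) a(5) True] obtain a' where a': "W d a'" "teq K d a (Node (Leaf i) a')" by blast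
    have "ydeg (mon True a) = ydeg (mon True (Node (Leaf i) a'))" by (rule arg_cong[OF teq_mon[OF a'(2)]])
    then have "ydeg (mon False a') \<ge> 1" using True by simp
    then have na': "isNode a'" by (rule YF_pos)
    have 1: "teq K d (Node a b) (Node (Node (Leaf i) a') b)" using a' a by (intro teq_congL)
    have 2: "teq K d (Node (Leaf i) (Node a' b)) (Node (Node (Leaf i) a') b)"
      using na' a' a iW by (intro teq_SW) auto
    have "teq K d (Node a b) (Node (Leaf i) (Node a' b))" by (rule teq_trans[OF 1 teq_sym[OF 2]])
    then show ?thesis using a' a by (intro exI[of _ "Node a' b"]) simp
  next
    case False
    have Ya: "ydeg (mon True a) = 1" using False Y_pos[of a] by simp
    then have "ydeg (mon False b) \<ge> 1" using a(6) by simp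
    then have nb: "isNode b" by (rule YF_pos)
    from a(1) obtain a1 a2 where aa: "a = Node a1 a2" by (auto simp: isNode_def)
    have "ydeg (mon False a2) = 0" using Ya Y_pos[of a1] aa by simp
    then obtain j where a2: "a2 = Leaf j" using YF_zero notNode_Leaf by blast
    have Ya1: "ydeg (mon True a1) = 1" using Ya aa a2 by simp
    have la1: "Poly_Mapping.lookup (mon True a1) (Inl i) > 0" using a(5) aa a2 by simp
    have Wa1: "W d a1" "j < d" using a(3) aa a2 by auto
    have 1: "teq K d (Node a b) (Node (Node a1 b) (Leaf j))"
      unfolding aa a2 using Wa1 a by (intro teq_I1) auto
    show ?thesis
    proof (cases "isNode a1")
      case False
      then obtain k where a1: "a1 = Leaf k" using notNode_Leaf by blast
      then have "k = i" using la1 by (auto split: if_splits)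
      have 2: "teq K d (Node (Leaf i) (Node b (Leaf j))) (Node (Node (Leaf i) b) (Leaf j))"
        using nb iW a Wa1 by (intro teq_SW) auto
      have "teq K d (Node a b) (Node (Leaf i) (Node b (Leaf j)))"
        using teq_trans[OF 1[unfolded a1 \<open>k = i\<close>] teq_sym[OF 2]] .
      then show ?thesis using a Wa1 by (intro exI[of _ "Node b (Leaf j)"]) simp
    next
      case True
      have "nl (Node a1 b) < n" using a(2) aa a2 by simp
      moreover have "Poly_Mapping.lookup (mon True (Node a1 b)) (Inl i) > 0" using la1 by simp
      moreover have "ydeg (mon True (Node a1 b)) \<ge> 2" using Ya1 \<open>ydeg (mon False b) \<ge> 1\<close> by simp
      ultimately obtain c where c: "W d c" "teq K d (Node a1 b) (Node (Leaf i) c)"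
        using IH[of "nl (Node a1 b)" "Node a1 b"] Wa1 a by auto
      have "ydeg (mon True (Node a1 b)) = ydeg (mon True (Node (Leaf i) c))" by (rule arg_cong[OF teq_mon[OF c(2)]])
      then have "ydeg (mon False c) \<ge> 1" using Ya1 \<open>ydeg (mon False b) \<ge> 1\<close> by simp
      then have nc: "isNode c" by (rule YF_pos)
      have 2: "teq K d (Node (Node a1 b) (Leaf j)) (Node (Node (Leaf i) c) (Leaf j))"
        using c Wa1 by (intro teq_congL) auto
      have 3: "teq K d (Node (Leaf i) (Node c (Leaf j))) (Node (Node (Leaf i) c) (Leaf j))"
        using nc c iW Wa1 by (intro teq_SW) auto
      have "teq K d (Node a b) (Node (Leaf i) (Node c (Leaf j)))"
        by (rule teq_trans[OF teq_trans[OF 1 2] teq_sym[OF 3]])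
      then show ?thesis using c Wa1 by (intro exI[of _ "Node c (Leaf j)"]) simp
    qed
  qed
  from less.prems(2) obtain a b where t: "t = Node a b" by (auto simp: isNode_def)
  have Wab: "W d a" "W d b" using less.prems(3) t by auto
  show ?case
  proof (cases "isNode a")
    case True
    show ?thesis
    proof (cases "Poly_Mapping.lookup (mon True a) (Inl i) > 0")
      case True
      then show ?thesis using LN[of a b] \<open>isNode a\<close> less.prems Wab t by auto
    next
      case False
      then have lb: "Poly_Mapping.lookup (mon False b) (Inl i) > 0" using less.prems(4) t by simp
      then have nb: "isNode b" by (cases b) (auto split: if_splits)
      have "Poly_Mapping.lookup (mon True b) (Inl i) > 0" using lb mon_Node_eq[OF nb] by simp
      moreover have "ydeg (mon True (Node b a)) \<ge> 2"
        using less.prems(5) t mon_Node_eq[OF nb] mon_Node_eq[OF \<open>isNode a\<close>] by simp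
      moreover have "nl (Node b a) = n" using less.prems(1) t by simp
      ultimately obtain t' where t': "W d t'" "teq K d (Node b a) (Node (Leaf i) t')"
        using LN[of b a] nb Wab by auto
      have "teq K d (Node a b) (Node b a)" using \<open>isNode a\<close> nb Wab by (intro teq_commN)
      then show ?thesis using t' t teq_trans[of K d "Node a b" "Node b a"] by blast
    qed
  next
    case False
    then obtain k where a: "a = Leaf k" using notNode_Leaf by blast
    show ?thesis
    proof (cases "k = i")
      case True then show ?thesis using t a Wab teq_refl by blast
    next
      case False
      then have lb: "Poly_Mapping.lookup (mon False b) (Inl i) > 0" using less.prems(4) t a by simp
      then have nb: "isNode b" by (cases b) (auto split: if_splits)
      have lbT: "Poly_Mapping.lookup (mon True b) (Inl i) > 0" using lb mon_Node_eq[OF nb] by simp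
      have kd: "k < d" using Wab a by simp
      show ?thesis
      proof (cases "ydeg (mon True b) \<ge> 2")
        case True
        have "nl b < n" using less.prems(1) t nl_pos[of a] by simp
        from IH[OF this refl nb Wab(2) lbT True] obtain b' where b': "W d b'" "teq K d b (Node (Leaf i) b')" by blast
        have 1: "teq K d (Node (Leaf k) b) (Node (Leaf k) (Node (Leaf i) b'))" using b' kd by (intro teq_congR) auto
        have 2: "teq K d (Node (Leaf k) (Node (Leaf i) b')) (Node (Leaf i) (Node (Leaf k) b'))"
          using b' kd iW by (intro teq_I2) auto
        have "teq K d t (Node (Leaf i) (Node (Leaf k) b'))" unfolding t a by (rule teq_trans[OF 1 2])
        then show ?thesis using b' kd by (intro exI[of _ "Node (Leaf k) b'"]) simp
      next
        case False
        have Yb: "ydeg (mon True b) = 1" using False Y_pos[of b] by simp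
        from nb obtain b1 b2 where bb: "b = Node b1 b2" by (auto simp: isNode_def)
        have "ydeg (mon False b2) = 0" using Yb Y_pos[of b1] bb by simp
        then obtain j where b2: "b2 = Leaf j" using YF_zero notNode_Leaf by blast
        have Yb1: "ydeg (mon True b1) = 1" using Yb bb b2 by simp
        have lb1: "Poly_Mapping.lookup (mon True b1) (Inl i) > 0" using lbT bb b2 by simp
        have Wb1: "W d b1" "j < d" using Wab bb b2 by auto
        show ?thesis
        proof (cases "isNode b1")
          case False
          then obtain k' where b1: "b1 = Leaf k'" using notNode_Leaf by blast
          then have "k' = i" using lb1 by (auto split: if_splits)
          have "teq K d (Node (Leaf k) (Node (Leaf i) (Leaf j))) (Node (Leaf i) (Node (Leaf k) (Leaf j)))"
            using kd iW Wb1 by (intro teq_I2) auto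
          then show ?thesis using t a bb b1 b2 \<open>k' = i\<close> kd Wb1
            by (intro exI[of _ "Node (Leaf k) (Leaf j)"]) auto
        next
          case True
          have 1: "teq K d (Node (Leaf k) (Node b1 (Leaf j))) (Node (Node (Leaf k) b1) (Leaf j))"
            using True kd Wb1 by (intro teq_SW) auto
          have "nl (Node (Leaf k) b1) < n" using less.prems(1) t bb b2 a by simp
          moreover have "Poly_Mapping.lookup (mon True (Node (Leaf k) b1)) (Inl i) > 0"
            using lb1 mon_Node_eq[OF True] by simp
          moreover have "ydeg (mon True (Node (Leaf k) b1)) \<ge> 2"
            using Yb1 mon_Node_eq[OF True] by simp
          ultimately obtain c where c: "W d c" "teq K d (Node (Leaf k) b1) (Node (Leaf i) c)"
            using IH[of "nl (Node (Leaf k) b1)" "Node (Leaf k) b1"] Wb1 kd by auto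
          have "ydeg (mon True (Node (Leaf k) b1)) = ydeg (mon True (Node (Leaf i) c))" by (rule arg_cong[OF teq_mon[OF c(2)]])
          then have "ydeg (mon False c) \<ge> 1" using Yb1 mon_Node_eq[OF True] by simp
          then have nc: "isNode c" by (rule YF_pos)
          have 2: "teq K d (Node (Node (Leaf k) b1) (Leaf j)) (Node (Node (Leaf i) c) (Leaf j))"
            using c Wb1 by (intro teq_congL) auto
          have 3: "teq K d (Node (Leaf i) (Node c (Leaf j))) (Node (Node (Leaf i) c) (Leaf j))"
            using nc c iW Wb1 by (intro teq_SW) auto
          have "teq K d t (Node (Leaf i) (Node c (Leaf j)))"
            unfolding t a bb b2 by (rule teq_trans[OF teq_trans[OF 1 2] teq_sym[OF 3]])
          then show ?thesis using c Wb1 by (intro exI[of _ "Node c (Leaf j)"]) simp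
        qed
      qed
    qed
  qed
qed

lemma ER:
  fixes K :: "'k::field itself"
  shows "isNode t \<Longrightarrow> W d t \<Longrightarrow> ydeg (mon True t) = 1 \<Longrightarrow> Poly_Mapping.lookup (mon True t) (Inr j) > 0 \<Longrightarrow>
    zdeg (mon True t) \<ge> 2 \<Longrightarrow> \<exists>t'. W d t' \<and> teq K d t (Node t' (Leaf j))"
proof (induction t)
  case (Leaf x) then show ?case by simp
next
  case (Node a b)
  have "ydeg (mon False b) = 0" using Node.prems(3) Y_pos[of a] by simp
  then obtain k where b: "b = Leaf k" using YF_zero notNode_Leaf by blast
  have kd: "k < d" using Node.prems(2) b by simp
  have Wa: "W d a" using Node.prems(2) by simp
  have jd: "j < d" using Node.prems(2,4) keys_mon[of "Inr j" True "Node a b"] by (auto simp: W_def in_keys_iff)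
  show ?case
  proof (cases "k = j")
    case True then show ?thesis using b Wa teq_refl by blast
  next
    case False
    have la: "Poly_Mapping.lookup (mon True a) (Inr j) > 0" using Node.prems(4) b False by simp
    have na: "isNode a" proof (rule ccontr)
      assume "\<not> isNode a" then obtain i where "a = Leaf i" using notNode_Leaf by blast
      then show False using la by simp
    qed
    have Ya: "ydeg (mon True a) = 1" using Node.prems(3) b by simp
    have Za: "zdeg (mon True a) \<ge> 1" using Node.prems(5) b by simp
    show ?thesis
    proof (cases "zdeg (mon True a) \<ge> 2")
      case True
      from Node.IH(1)[OF na Wa Ya la True] obtain a' where a': "W d a'" "teq K d a (Node a' (Leaf j))" by blast
      have 1: "teq K d (Node a (Leaf k)) (Node (Node a' (Leaf j)) (Leaf k))" using a' kd jd by (intro teq_congL) auto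
      have 2: "teq K d (Node (Node a' (Leaf j)) (Leaf k)) (Node (Node a' (Leaf k)) (Leaf j))"
        using a' kd jd by (intro teq_I1) auto
      have "teq K d (Node a b) (Node (Node a' (Leaf k)) (Leaf j))" unfolding b by (rule teq_trans[OF 1 2])
      then show ?thesis using a' kd by (intro exI[of _ "Node a' (Leaf k)"]) simp
    next
      case False
      then have Za1: "zdeg (mon True a) = 1" using Za by simp
      from na obtain a1 a2 where aa: "a = Node a1 a2" by (auto simp: isNode_def)
      have "ydeg (mon False a2) = 0" using Ya aa Y_pos[of a1] by simp
      then obtain j' where a2: "a2 = Leaf j'" using YF_zero notNode_Leaf by blast
      have "zdeg (mon True a1) = 0" using Za1 aa a2 by simp
      then obtain i where a1: "a1 = Leaf i" using ZT_zero notNode_Leaf by blast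
      have "j' = j" using la aa a1 a2 by (auto split: if_splits)
      have "teq K d (Node (Node (Leaf i) (Leaf j)) (Leaf k)) (Node (Node (Leaf i) (Leaf k)) (Leaf j))"
        using Node.prems(2) aa a1 a2 b \<open>j' = j\<close> by (intro teq_I1) auto
      then show ?thesis using Node.prems(2) aa a1 a2 b \<open>j' = j\<close>
        by (intro exI[of _ "Node (Leaf i) (Leaf k)"]) auto
    qed
  qed
qed

lemma uniq:
  fixes K :: "'k::field itself"
  shows "nl s = n \<Longrightarrow> isNode s \<Longrightarrow> isNode t \<Longrightarrow> W d s \<Longrightarrow> W d t \<Longrightarrow> mon True s = mon True t \<Longrightarrow> teq K d s t"
proof (induction n arbitrary: s t rule: less_induct)
  case (less n s t)
  note IH = less.IH
  have nlt: "nl t = n" using less.prems(1,6) YZ_nl[of True s] YZ_nl[of True t] by simp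
  show ?case
  proof (cases "ydeg (mon True s) \<ge> 2")
    case True
    then obtain i where i: "Poly_Mapping.lookup (mon True s) (Inl i) > 0" using ydeg_pos by fastforce
    obtain s' where s': "W d s'" "teq K d s (Node (Leaf i) s')"
      using EL[OF less.prems(1,2,4) i True] by blast
    obtain t' where t': "W d t'" "teq K d t (Node (Leaf i) t')"
      using EL[OF nlt less.prems(3,5), of i] i True less.prems(6) by auto
    have ms: "mon True s = mon True (Node (Leaf i) s')" by (rule teq_mon[OF s'(2)])
    have mt: "mon True t = mon True (Node (Leaf i) t')" by (rule teq_mon[OF t'(2)])
    have mF: "mon False s' = mon False t'" using ms mt less.prems(6) by simp
    have "ydeg (mon False s') \<ge> 1" using arg_cong[OF ms, of ydeg] True by simp
    then have ns': "isNode s'" by (rule YF_pos)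
    have "ydeg (mon False t') \<ge> 1" using arg_cong[OF mt, of ydeg] True less.prems(6) by simp
    then have nt': "isNode t'" by (rule YF_pos)
    have "nl s' < n" using less.prems(1) teq_nl[OF s'(2)] by simp
    then have "teq K d s' t'" using IH[OF _ refl ns' nt' s'(1) t'(1)] mF mon_Node_eq[OF ns'] mon_Node_eq[OF nt'] by simp
    then have "teq K d (Node (Leaf i) s') (Node (Leaf i) t')" using i less.prems(4) keys_mon[of "Inl i" True s]
      by (intro teq_congR) (auto simp: W_def in_keys_iff)
    then show ?thesis using s'(2) t'(2) teq_trans teq_sym by metis
  next
    case False
    have Ys: "ydeg (mon True s) = 1" using False Y_pos[of s] by simp
    show ?thesis
    proof (cases "zdeg (mon True s) \<ge> 2")
      case True
      then obtain j where j: "Poly_Mapping.lookup (mon True s) (Inr j) > 0" using zdeg_pos by fastforce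
      obtain s' where s': "W d s'" "teq K d s (Node s' (Leaf j))"
        using ER[OF less.prems(2,4) Ys j True] by blast
      obtain t' where t': "W d t'" "teq K d t (Node t' (Leaf j))"
        using ER[OF less.prems(3,5), of j] Ys j True less.prems(6) by auto
      have ms: "mon True s = mon True (Node s' (Leaf j))" by (rule teq_mon[OF s'(2)])
      have mt: "mon True t = mon True (Node t' (Leaf j))" by (rule teq_mon[OF t'(2)])
      have mT: "mon True s' = mon True t'" using ms mt less.prems(6) by simp
      have "zdeg (mon True s') \<ge> 1" using arg_cong[OF ms, of zdeg] True by simp
      then have ns': "isNode s'" by (rule ZT_pos)
      have "zdeg (mon True t') \<ge> 1" using arg_cong[OF mt, of zdeg] True less.prems(6) by simp
      then have nt': "isNode t'" by (rule ZT_pos)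
      have "nl s' < n" using less.prems(1) teq_nl[OF s'(2)] by simp
      then have "teq K d s' t'" using IH[OF _ refl ns' nt' s'(1) t'(1)] mT by simp
      then have "teq K d (Node s' (Leaf j)) (Node t' (Leaf j))" using j less.prems(4) keys_mon[of "Inr j" True s]
        by (intro teq_congL) (auto simp: W_def in_keys_iff)
      then show ?thesis using s'(2) t'(2) teq_trans teq_sym by metis
    next
      case False
      have Zs: "zdeg (mon True s) = 1" using False ZT_zero[of s] less.prems(2) by auto
      have shape: "\<exists>i j. r = Node (Leaf i) (Leaf j)" if "isNode r" "ydeg (mon True r) = 1" "zdeg (mon True r) = 1" for r
      proof -
        from that(1) obtain a b where r: "r = Node a b" by (auto simp: isNode_def)
        have "ydeg (mon False b) = 0" using that(2) r Y_pos[of a] by simp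
        moreover have "zdeg (mon True a) = 0" using that(3) r Z_pos[of b] by simp
        ultimately show ?thesis using r YF_zero ZT_zero notNode_Leaf by metis
      qed
      obtain i j where si: "s = Node (Leaf i) (Leaf j)" using shape[OF less.prems(2) Ys Zs] by blast
      obtain i' j' where ti: "t = Node (Leaf i') (Leaf j')"
        using shape[OF less.prems(3)] Ys Zs less.prems(6) by metis
      have "Poly_Mapping.lookup (mon True s) (Inl i) = Poly_Mapping.lookup (mon True t) (Inl i)"
        using less.prems(6) by simp
      then have "i = i'" using si ti by (auto split: if_splits)
      have "Poly_Mapping.lookup (mon True s) (Inr j) = Poly_Mapping.lookup (mon True t) (Inr j)"
        using less.prems(6) by simp
      then have "j = j'" using si ti by (auto split: if_splits)
      show ?thesis using si ti \<open>i = i'\<close> \<open>j = j'\<close> teq_refl by simp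
    qed
  qed
qed

lemma sum_singles: "(\<Sum>m\<in>Poly_Mapping.keys p. Poly_Mapping.single m (Poly_Mapping.lookup p m)) = p"
proof (rule poly_mapping_eqI)
  fix k
  have "Poly_Mapping.lookup (\<Sum>m\<in>Poly_Mapping.keys p. Poly_Mapping.single m (Poly_Mapping.lookup p m)) k
     = (\<Sum>m\<in>Poly_Mapping.keys p. if m = k then Poly_Mapping.lookup p m else 0)"
    by (simp add: lookup_sum lookup_single when_def)
  also have "\<dots> = Poly_Mapping.lookup p k"
    by (simp add: sum.delta' in_keys_iff)
  finally show "Poly_Mapping.lookup (\<Sum>m\<in>Poly_Mapping.keys p. Poly_Mapping.single m (Poly_Mapping.lookup p m)) k = Poly_Mapping.lookup p k" .
qed

lemma split_var:
  fixes m :: "'a \<Rightarrow>\<^sub>0 nat"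
  assumes "Poly_Mapping.lookup m v > 0"
  shows "m = Poly_Mapping.single v 1 + (m - Poly_Mapping.single v 1)"
  apply (rule poly_mapping_eqI)
  using assms apply (auto simp: lookup_add lookup_minus lookup_single when_def)
  done

lemma deg_zero: "ydeg m + zdeg m = 0 \<Longrightarrow> m = 0"
proof (rule ccontr)
  assume a: "ydeg m + zdeg m = 0" "m \<noteq> 0"
  then obtain v where "v \<in> Poly_Mapping.keys m" using keys_eq_empty by blast
  then have "Poly_Mapping.lookup m v > 0" by (simp add: in_keys_iff)
  then have "m = Poly_Mapping.single v 1 + (m - Poly_Mapping.single v 1)" by (rule split_var)
  then have "ydeg m + zdeg m = ydeg (Poly_Mapping.single v 1) + zdeg (Poly_Mapping.single v 1) + ydeg (m - Poly_Mapping.single v 1) + zdeg (m - Poly_Mapping.single v 1)"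
    by (metis add.assoc add.left_commute ydeg_add zdeg_add)
  moreover have "ydeg (Poly_Mapping.single v 1) + zdeg (Poly_Mapping.single v 1) = 1" by (cases v) auto
  ultimately show False using a by simp
qed

lemma mvo_sub: "mono_vars_ok d m \<Longrightarrow> mono_vars_ok d (m - n)"
  unfolding mono_vars_ok_def by (auto simp: in_keys_iff lookup_minus)

lemma mvo_var: "mono_vars_ok d m \<Longrightarrow> Poly_Mapping.lookup m (Inl i) > 0 \<Longrightarrow> i < d"
  "mono_vars_ok d m \<Longrightarrow> Poly_Mapping.lookup m (Inr i) > 0 \<Longrightarrow> i < d"
proof -
  assume a: "mono_vars_ok d m" "Poly_Mapping.lookup m (Inl i) > 0"
  then have "Inl i \<in> Poly_Mapping.keys m" by (simp add: in_keys_iff)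
  with a(1) show "i < d" unfolding mono_vars_ok_def by fastforce
next
  assume a: "mono_vars_ok d m" "Poly_Mapping.lookup m (Inr i) > 0"
  then have "Inr i \<in> Poly_Mapping.keys m" by (simp add: in_keys_iff)
  with a(1) show "i < d" unfolding mono_vars_ok_def by fastforce
qed

lemma exists_tree:
  "ydeg m + zdeg m = n \<Longrightarrow> mono_vars_ok d m \<Longrightarrow> ydeg m \<ge> 1 \<Longrightarrow> zdeg m \<ge> 1 \<Longrightarrow>
   \<exists>t. isNode t \<and> W d t \<and> mon True t = m"
proof (induction n arbitrary: m rule: less_induct)
  case (less n m)
  obtain i where i: "Poly_Mapping.lookup m (Inl i) > 0" using ydeg_pos less.prems(3) by fastforce
  define m' where "m' = m - Poly_Mapping.single (Inl i) 1"
  have mi: "m = Poly_Mapping.single (Inl i) 1 + m'" unfolding m'_def by (rule split_var[OF i])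
  have Ym': "ydeg m = 1 + ydeg m'" "zdeg m = zdeg m'" using arg_cong[OF mi, of ydeg] arg_cong[OF mi, of zdeg] by simp_all
  have id: "i < d" using mvo_var(1)[OF less.prems(2) i] .
  have mv': "mono_vars_ok d m'" unfolding m'_def by (rule mvo_sub[OF less.prems(2)])
  show ?case
  proof (cases "ydeg m \<ge> 2")
    case True
    have lt: "ydeg m' + zdeg m' < n" using less.prems(1) Ym' by simp
    have "ydeg m' \<ge> 1" "zdeg m' \<ge> 1" using Ym' True less.prems(4) by simp_all
    then obtain t' where t': "isNode t'" "W d t'" "mon True t' = m'"
      using less.IH[OF lt refl mv'] by blast
    show ?thesis using t' mi id mon_Node_eq[OF t'(1)]
      by (intro exI[of _ "Node (Leaf i) t'"]) simp
  next
    case False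
    have Ym: "ydeg m = 1" using False less.prems(3) by simp
    obtain j where j: "Poly_Mapping.lookup m (Inr j) > 0" using zdeg_pos less.prems(4) by fastforce
    define m'' where "m'' = m - Poly_Mapping.single (Inr j) 1"
    have mj: "m = m'' + Poly_Mapping.single (Inr j) 1" unfolding m''_def using split_var[OF j] by (simp add: add.commute)
    have Zm'': "ydeg m = ydeg m''" "zdeg m = zdeg m'' + 1" using arg_cong[OF mj, of ydeg] arg_cong[OF mj, of zdeg] by simp_all
    have jd: "j < d" using mvo_var(2)[OF less.prems(2) j] .
    have mv'': "mono_vars_ok d m''" unfolding m''_def by (rule mvo_sub[OF less.prems(2)])
    show ?thesis
    proof (cases "zdeg m \<ge> 2")
      case True
      have lt: "ydeg m'' + zdeg m'' < n" using less.prems(1) Zm'' by simp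
      have "ydeg m'' \<ge> 1" "zdeg m'' \<ge> 1" using Zm'' True less.prems(3) by simp_all
      then obtain t' where t': "isNode t'" "W d t'" "mon True t' = m''"
        using less.IH[OF lt refl mv''] by blast
      show ?thesis using t' mj jd by (intro exI[of _ "Node t' (Leaf j)"]) simp
    next
      case False
      have "zdeg m = 1" using False less.prems(4) by simp
      have "Poly_Mapping.lookup m' (Inr j) > 0" using j mi by (simp add: lookup_add lookup_single)
      then have "m' = Poly_Mapping.single (Inr j) 1 + (m' - Poly_Mapping.single (Inr j) 1)" by (rule split_var)
      moreover have "ydeg (m' - Poly_Mapping.single (Inr j) 1) + zdeg (m' - Poly_Mapping.single (Inr j) 1) = 0"
        using arg_cong[OF calculation, of ydeg] arg_cong[OF calculation, of zdeg] Ym' Ym \<open>zdeg m = 1\<close> by simp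
      ultimately have "m' = Poly_Mapping.single (Inr j) 1" using deg_zero[of "m' - Poly_Mapping.single (Inr j) 1"] by simp
      then show ?thesis using mi id jd by (intro exI[of _ "Node (Leaf i) (Leaf j)"]) simp
    qed
  qed
qed

definition N :: "nat \<Rightarrow> ((nat+nat) \<Rightarrow>\<^sub>0 nat) \<Rightarrow> btree" where
  "N d m = (SOME t. isNode t \<and> W d t \<and> mon True t = m)"

lemma N_props: "isNode t \<Longrightarrow> W d t \<Longrightarrow> isNode (N d (mon True t)) \<and> W d (N d (mon True t)) \<and> mon True (N d (mon True t)) = mon True t"
  unfolding N_def by (rule someI[of _ t]) simp

lemma N_props2: "mono_vars_ok d m \<Longrightarrow> ydeg m \<ge> 1 \<Longrightarrow> zdeg m \<ge> 1 \<Longrightarrow> isNode (N d m) \<and> W d (N d m) \<and> mon True (N d m) = m"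
proof -
  assume a: "mono_vars_ok d m" "ydeg m \<ge> 1" "zdeg m \<ge> 1"
  obtain t where "isNode t \<and> W d t \<and> mon True t = m" using exists_tree[OF refl a] by blast
  then show ?thesis unfolding N_def by (rule someI)
qed

lemma FA_sq_fbasis: "isNode t \<Longrightarrow> W d t \<Longrightarrow> (fbasis t :: btree \<Rightarrow> 'k::field) \<in> FA_sq d"
  by (auto simp: isNode_def fbasis_Node intro!: FA_sq.prod fbasis_FA)

lemma FA_sq_fsum: "finite A \<Longrightarrow> (\<And>a. a \<in> A \<Longrightarrow> F a \<in> FA_sq d) \<Longrightarrow> fsum A F \<in> FA_sq d"
  by (induction A rule: finite_induct) (auto simp: fsum_empty fsum_insert intro: FA_sq.zero FA_sq.add)

lemma ideal_fsum: "finite A \<Longrightarrow> (\<And>a. a \<in> A \<Longrightarrow> F a \<in> bicomm_ideal d) \<Longrightarrow> fsum A F \<in> bicomm_ideal d"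
  by (induction A rule: finite_induct) (auto simp: fsum_empty fsum_insert intro: bicomm_ideal.zero bicomm_ideal.add)

lemma lookup_phi: "finite (supp f) \<Longrightarrow> Poly_Mapping.lookup (phi s f) m = (\<Sum>t\<in>supp f. if mon s t = m then f t else 0)"
  unfolding phi_def by (simp add: lookup_sum lookup_single when_def)

lemma keys_phi: "Poly_Mapping.keys (phi s f) \<subseteq> mon s ` supp f"
proof -
  have "Poly_Mapping.keys (phi s f) \<subseteq> (\<Union>t\<in>supp f. Poly_Mapping.keys (Poly_Mapping.single (mon s t) (f t)))"
    unfolding phi_def by (rule keys_sum)
  also have "\<dots> \<subseteq> mon s ` supp f" by auto
  finally show ?thesis .
qed

lemma kernel:
  fixes f :: "btree \<Rightarrow> 'k::field"
  assumes f: "f \<in> FA_sq d" and z: "phi True f = 0"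
  shows "f \<in> bicomm_ideal d"
proof -
  let ?S = "supp f"
  have fin: "finite ?S" and nodes: "\<And>t. t \<in> ?S \<Longrightarrow> isNode t \<and> W d t" using FA_sq_props[OF f] by auto
  let ?G = "fsum ?S (\<lambda>t. fsmul (f t) (fminus (fbasis t) (fbasis (N d (mon True t)))))"
  have G: "?G \<in> bicomm_ideal d"
  proof (rule ideal_fsum[OF fin])
    fix t assume t: "t \<in> ?S"
    from nodes[OF t] have np: "isNode (N d (mon True t)) \<and> W d (N d (mon True t)) \<and> mon True (N d (mon True t)) = mon True t"
      using N_props by blast
    have "teq TYPE('k) d t (N d (mon True t))"
      using nodes[OF t] np by (intro uniq[OF refl]) auto
    then show "fsmul (f t) (fminus (fbasis t) (fbasis (N d (mon True t)))) \<in> bicomm_ideal d"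
      unfolding teq_def by (rule bicomm_ideal.smul)
  qed
  have "?G = f"
  proof
    fix r
    have "?G r = (\<Sum>t\<in>?S. f t * ((if r = t then 1 else 0) - (if r = N d (mon True t) then 1 else 0)))"
      by (simp add: fsum_def fsmul_def fminus_def fbasis_def)
    also have "\<dots> = (\<Sum>t\<in>?S. (if r = t then f t else 0) - (if r = N d (mon True t) then f t else 0))"
      by (rule sum.cong) auto
    also have "\<dots> = (\<Sum>t\<in>?S. if r = t then f t else 0) - (\<Sum>t\<in>?S. if r = N d (mon True t) then f t else 0)"
      by (rule sum_subtractf)
    also have "(\<Sum>t\<in>?S. if r = t then f t else 0) = f r"
      using fin by (simp add: sum.delta) (simp add: supp_def)
    also have "(\<Sum>t\<in>?S. if r = N d (mon True t) then f t else 0) = 0"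
    proof (cases "\<exists>t0\<in>?S. r = N d (mon True t0)")
      case True
      then obtain t0 where t0: "t0 \<in> ?S" "r = N d (mon True t0)" by blast
      have "\<And>t. t \<in> ?S \<Longrightarrow> (r = N d (mon True t)) = (mon True t = mon True t0)"
      proof -
        fix t assume t: "t \<in> ?S"
        show "(r = N d (mon True t)) = (mon True t = mon True t0)"
        proof
          assume "r = N d (mon True t)"
          then have "mon True r = mon True t" using N_props[of t d] nodes[OF t] by simp
          moreover have "mon True r = mon True t0" using N_props[of t0 d] nodes[OF t0(1)] t0(2) by simp
          ultimately show "mon True t = mon True t0" by simp
        next
          assume "mon True t = mon True t0"
          then show "r = N d (mon True t)" using t0(2) by simp
        qed
      qed
      then have "(\<Sum>t\<in>?S. if r = N d (mon True t) then f t else 0) = (\<Sum>t\<in>?S. if mon True t = mon True t0 then f t else 0)"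
        by (intro sum.cong) auto
      also have "\<dots> = Poly_Mapping.lookup (phi True f) (mon True t0)" using lookup_phi[OF fin] by simp
      finally show ?thesis using z by simp
    next
      case False
      then show ?thesis by (intro sum.neutral) auto
    qed
    finally show "?G r = f r" by simp
  qed
  with G show ?thesis by simp
qed

lemma mdeg_mon_pt: "Poly_Mapping.lookup (mon s t) (Inl i) + Poly_Mapping.lookup (mon s t) (Inr i) = tdeg t i"
proof (induction t arbitrary: s)
  case (Leaf x) then show ?case by (auto simp: lookup_single when_def)
next
  case (Node t1 t2)
  have "Poly_Mapping.lookup (mon s (Node t1 t2)) (Inl i) + Poly_Mapping.lookup (mon s (Node t1 t2)) (Inr i)
    = (Poly_Mapping.lookup (mon True t1) (Inl i) + Poly_Mapping.lookup (mon True t1) (Inr i))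
    + (Poly_Mapping.lookup (mon False t2) (Inl i) + Poly_Mapping.lookup (mon False t2) (Inr i))"
    by (simp add: lookup_add)
  then show ?case using Node.IH(1)[of True] Node.IH(2)[of False] by simp
qed

lemma mdeg_mon: "mdeg (mon s t) = tdeg t"
  unfolding mdeg_def using mdeg_mon_pt by blast

lemma single_sum': "Poly_Mapping.single k (\<Sum>a\<in>A. c a) = (\<Sum>a\<in>A. Poly_Mapping.single k (c a))"
  by (rule poly_mapping_eqI) (simp add: lookup_sum lookup_single when_def)

lemma psmul_sum: "psmul (\<Sum>a\<in>A. c a) p = (\<Sum>a\<in>A. psmul (c a) p)"
  by (simp add: psmul_conv single_sum' sum_distrib_right)

definition Sub :: "nat \<Rightarrow> (nat \<Rightarrow> nat \<Rightarrow> 'k::field) \<Rightarrow> ((nat+nat) \<Rightarrow>\<^sub>0 nat) \<Rightarrow> 'k pol" where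
  "Sub d g m = (\<Prod>v\<in>Poly_Mapping.keys m. lin_var d g v ^ Poly_Mapping.lookup m v)"

lemma Sub_superset: "finite K \<Longrightarrow> Poly_Mapping.keys m \<subseteq> K \<Longrightarrow> Sub d g m = (\<Prod>v\<in>K. lin_var d g v ^ Poly_Mapping.lookup m v)"
  unfolding Sub_def by (rule prod.mono_neutral_left) (auto simp: in_keys_iff)

lemma Sub_add: "Sub d g (m + n) = Sub d g m * Sub d g n"
proof -
  let ?K = "Poly_Mapping.keys m \<union> Poly_Mapping.keys n"
  have k: "Poly_Mapping.keys (m + n) \<subseteq> ?K" by (rule keys_add)
  have "Sub d g (m + n) = (\<Prod>v\<in>?K. lin_var d g v ^ Poly_Mapping.lookup (m+n) v)"
    by (rule Sub_superset) (use k in auto)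
  also have "\<dots> = (\<Prod>v\<in>?K. lin_var d g v ^ Poly_Mapping.lookup m v * lin_var d g v ^ Poly_Mapping.lookup n v)"
    by (simp add: lookup_add power_add)
  also have "\<dots> = Sub d g m * Sub d g n"
    by (simp add: prod.distrib Sub_superset[of ?K m] Sub_superset[of ?K n])
  finally show ?thesis .
qed

lemma Sub_single: "Sub d g (Poly_Mapping.single v 1) = lin_var d g v"
  by (simp add: Sub_def)

lemma act_tree_phi: "finite (supp (act_tree d g t)) \<and> phi s (act_tree d g t) = Sub d g (mon s t)"
proof (induction t arbitrary: s)
  case (Leaf i)
  have fin: "\<And>j. finite (supp (fsmul (g j i) (fbasis (Leaf j)) :: btree \<Rightarrow> 'a))"
    by (rule fin_fsmul) simp
  have "phi s (act_tree d g (Leaf i)) = (\<Sum>j<d. psmul (g j i) (Poly_Mapping.single (mon s (Leaf j)) 1))"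
    using fin by (simp add: phi_fsum phi_fsmul)
  also have "\<dots> = Sub d g (mon s (Leaf i))"
  proof -
    have e: "\<And>j. Poly_Mapping.single (mon s (Leaf j)) 1 = (if s then Yv j else (Zv j :: 'a pol))"
      by (cases s) (simp_all only: mon.simps Yv_def Zv_def if_True if_False)
    have e2: "Sub d g (mon s (Leaf i)) = lin_var d g (if s then Inl i else Inr i)"
      by (simp only: mon.simps Sub_single)
    show ?thesis unfolding e e2 by (cases s) (simp_all add: lin_var_def)
  qed
  finally show ?case using fin by (simp add: fin_fsum)
next
  case (Node a b)
  then show ?case by (simp add: fin_fmult phi_fmult Sub_add)
qed

lemma equivariant:
  fixes f :: "btree \<Rightarrow> 'k::field"
  assumes f: "f \<in> FA_sq d"
  shows "phi True (act_FA d g f) = act_pol d g (phi True f)"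
proof -
  let ?S = "supp f"
  have fin: "finite ?S" using FA_sq_props[OF f] by auto
  have fin2: "\<And>t. finite (supp (fsmul (f t) (act_tree d g t)))"
    using act_tree_phi by (blast intro: fin_fsmul)
  have "act_FA d g f = fsum ?S (\<lambda>t. fsmul (f t) (act_tree d g t))"
    by (simp add: act_FA_def supp_def)
  then have "phi True (act_FA d g f) = (\<Sum>t\<in>?S. phi True (fsmul (f t) (act_tree d g t)))"
    using fin fin2 by (simp add: phi_fsum)
  also have "\<dots> = (\<Sum>t\<in>?S. psmul (f t) (Sub d g (mon True t)))"
  proof (rule sum.cong[OF refl])
    fix t
    have A: "finite (supp (act_tree d g t))" and B: "phi True (act_tree d g t) = Sub d g (mon True t)"
      using act_tree_phi by blast+
    show "phi True (fsmul (f t) (act_tree d g t)) = psmul (f t) (Sub d g (mon True t))"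
      by (simp add: phi_fsmul A B)
  qed
  finally have L: "phi True (act_FA d g f) = (\<Sum>t\<in>?S. psmul (f t) (Sub d g (mon True t)))" .
  let ?K = "mon True ` ?S"
  have "act_pol d g (phi True f) = (\<Sum>m\<in>?K. psmul (Poly_Mapping.lookup (phi True f) m) (Sub d g m))"
    unfolding act_pol_def Sub_def[symmetric]
  proof (rule sum.mono_neutral_left)
    show "finite ?K" using fin by simp
    show "Poly_Mapping.keys (phi True f) \<subseteq> ?K" by (rule keys_phi)
    show "\<forall>m\<in>?K - Poly_Mapping.keys (phi True f). psmul (Poly_Mapping.lookup (phi True f) m) (Sub d g m) = 0"
    proof
      fix m assume "m \<in> ?K - Poly_Mapping.keys (phi True f)"
      then have "Poly_Mapping.lookup (phi True f) m = 0" by (simp add: in_keys_iff)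
      then show "psmul (Poly_Mapping.lookup (phi True f) m) (Sub d g m) = 0" by (simp add: psmul_conv)
    qed
  qed
  also have "\<dots> = (\<Sum>m\<in>?K. \<Sum>t\<in>{t\<in>?S. mon True t = m}. psmul (f t) (Sub d g (mon True t)))"
  proof (rule sum.cong[OF refl])
    fix m assume "m \<in> ?K"
    have "Poly_Mapping.lookup (phi True f) m = (\<Sum>t\<in>{t\<in>?S. mon True t = m}. f t)"
      using lookup_phi[OF fin] fin by (simp add: sum.inter_filter)
    then show "psmul (Poly_Mapping.lookup (phi True f) m) (Sub d g m) = (\<Sum>t\<in>{t\<in>?S. mon True t = m}. psmul (f t) (Sub d g (mon True t)))"
      by (simp add: psmul_sum)
  qed
  also have "\<dots> = (\<Sum>t\<in>?S. psmul (f t) (Sub d g (mon True t)))"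
    by (rule sum.image_gen[symmetric]) (rule fin)
  finally show ?thesis using L by simp
qed

lemma Wsum_eq: "Wsum d = (omega_tensor d :: 'k::field pol set)"
proof
  show "Wsum d \<subseteq> (omega_tensor d :: 'k pol set)"
  proof
    fix P assume "P \<in> Wsum d"
    then obtain S F where SF: "finite S" "S \<subseteq> {(p,q). p \<ge> 1 \<and> q \<ge> 1}"
      "\<forall>pq\<in>S. F pq \<in> Wtensor d (fst pq) (snd pq)" "P = (\<Sum>pq\<in>S. F pq)"
      unfolding Wsum_def by blast
    have "Poly_Mapping.keys P \<subseteq> (\<Union>pq\<in>S. Poly_Mapping.keys (F pq))" unfolding SF(4) by (rule keys_sum)
    show "P \<in> omega_tensor d" unfolding omega_tensor_def
    proof (rule CollectI, rule ballI)
      fix m assume "m \<in> Poly_Mapping.keys P"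
      then obtain pq where pq: "pq \<in> S" "m \<in> Poly_Mapping.keys (F pq)" using \<open>Poly_Mapping.keys P \<subseteq> _\<close> by blast
      then have "mono_vars_ok d m \<and> ydeg m = fst pq \<and> zdeg m = snd pq" using SF(3) unfolding Wtensor_def by blast
      moreover have "fst pq \<ge> 1" "snd pq \<ge> 1" using SF(2) pq(1) by auto
      ultimately show "mono_vars_ok d m \<and> ydeg m \<ge> 1 \<and> zdeg m \<ge> 1" by simp
    qed
  qed
next
  show "omega_tensor d \<subseteq> (Wsum d :: 'k pol set)"
  proof
    fix P :: "'k pol" assume P: "P \<in> omega_tensor d"
    have Pm: "\<And>m. m \<in> Poly_Mapping.keys P \<Longrightarrow> mono_vars_ok d m \<and> ydeg m \<ge> 1 \<and> zdeg m \<ge> 1"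
      using P unfolding omega_tensor_def by blast
    let ?h = "\<lambda>m. (ydeg m, zdeg m)"
    let ?S = "?h ` Poly_Mapping.keys P"
    let ?F = "\<lambda>pq. \<Sum>m\<in>{m\<in>Poly_Mapping.keys P. ?h m = pq}. Poly_Mapping.single m (Poly_Mapping.lookup P m)"
    have c1: "finite ?S" by (rule finite_imageI) simp
    have c2: "?S \<subseteq> {(p,q). p \<ge> 1 \<and> q \<ge> 1}"
    proof
      fix pq assume "pq \<in> ?S"
      then obtain m where "m \<in> Poly_Mapping.keys P" "pq = ?h m" by blast
      then show "pq \<in> {(p,q). p \<ge> 1 \<and> q \<ge> 1}" using Pm by simp
    qed
    have c3: "\<forall>pq\<in>?S. ?F pq \<in> Wtensor d (fst pq) (snd pq)"
    proof
      fix pq assume "pq \<in> ?S"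
      have k1: "Poly_Mapping.keys (?F pq) \<subseteq> (\<Union>m\<in>{m\<in>Poly_Mapping.keys P. ?h m = pq}. Poly_Mapping.keys (Poly_Mapping.single m (Poly_Mapping.lookup P m)))"
        by (rule keys_sum)
      have k2: "\<And>m. Poly_Mapping.keys (Poly_Mapping.single m (Poly_Mapping.lookup P m)) \<subseteq> {m}"
        by simp
      show "?F pq \<in> Wtensor d (fst pq) (snd pq)" unfolding Wtensor_def
      proof (rule CollectI, rule ballI)
        fix m assume "m \<in> Poly_Mapping.keys (?F pq)"
        then obtain m' where m': "m' \<in> Poly_Mapping.keys P" "?h m' = pq" "m \<in> Poly_Mapping.keys (Poly_Mapping.single m' (Poly_Mapping.lookup P m'))"
          using k1 by blast
        then have "m = m'" using k2 by blast
        then show "mono_vars_ok d m \<and> ydeg m = fst pq \<and> zdeg m = snd pq" using m' Pm by auto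
      qed
    qed
    have c4: "P = (\<Sum>pq\<in>?S. ?F pq)"
    proof -
      have "(\<Sum>m\<in>Poly_Mapping.keys P. Poly_Mapping.single m (Poly_Mapping.lookup P m)) = (\<Sum>pq\<in>?S. ?F pq)"
        by (rule sum.image_gen) (rule finite_keys)
      then show ?thesis by (simp only: sum_singles)
    qed
    have "\<exists>S F. finite S \<and> S \<subseteq> {(p,q). p \<ge> 1 \<and> q \<ge> 1}
                  \<and> (\<forall>pq\<in>S. F pq \<in> Wtensor d (fst pq) (snd pq)) \<and> P = (\<Sum>pq\<in>S. F pq)"
      apply (rule exI[of _ ?S])
      apply (rule exI[of _ ?F])
      using c1 c2 c3 c4 by blast
    then show "P \<in> Wsum d" unfolding Wsum_def by (rule CollectI)
  qed
qed

lemma mvo_mon: "W d t \<Longrightarrow> mono_vars_ok d (mon True t)"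
  unfolding mono_vars_ok_def
proof
  fix v assume W: "W d t" and v: "v \<in> Poly_Mapping.keys (mon True t)"
  have "(case v of Inl j \<Rightarrow> j | Inr j \<Rightarrow> j) \<in> leaves t" by (rule keys_mon[OF v])
  with W show "case v of Inl i \<Rightarrow> i < d | Inr i \<Rightarrow> i < d" unfolding W_def by (cases v) auto
qed

lemma image_phi: "phi True ` FA_sq d = (omega_tensor d :: 'k::field pol set)"
proof
  show "phi True ` FA_sq d \<subseteq> (omega_tensor d :: 'k pol set)"
  proof
    fix p :: "'k pol" assume "p \<in> phi True ` FA_sq d"
    then obtain f where f: "f \<in> FA_sq d" "p = phi True f" by (rule imageE) simp
    have nodes: "\<And>t. t \<in> supp f \<Longrightarrow> isNode t \<and> W d t" using FA_sq_props[OF f(1)] by auto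
    show "p \<in> omega_tensor d" unfolding omega_tensor_def
    proof (rule CollectI, rule ballI)
      fix m assume m: "m \<in> Poly_Mapping.keys p"
      have "m \<in> mon True ` supp f" using keys_phi[of True f] m unfolding f(2) by blast
      then obtain t where t: "t \<in> supp f" "m = mon True t" by blast
      have "zdeg (mon True t) \<noteq> 0" using ZT_zero[of t] nodes[OF t(1)] by simp
      then show "mono_vars_ok d m \<and> ydeg m \<ge> 1 \<and> zdeg m \<ge> 1"
        unfolding t(2) using nodes[OF t(1)] mvo_mon[of d t] Y_pos[of t] by simp
    qed
  qed
next
  show "(omega_tensor d :: 'k pol set) \<subseteq> phi True ` FA_sq d"
  proof
    fix p :: "'k pol" assume p: "p \<in> omega_tensor d"
    have pm: "\<And>m. m \<in> Poly_Mapping.keys p \<Longrightarrow> isNode (N d m) \<and> W d (N d m) \<and> mon True (N d m) = m"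
    proof -
      fix m assume "m \<in> Poly_Mapping.keys p"
      then have "mono_vars_ok d m \<and> ydeg m \<ge> 1 \<and> zdeg m \<ge> 1" using p unfolding omega_tensor_def by blast
      then show "isNode (N d m) \<and> W d (N d m) \<and> mon True (N d m) = m" using N_props2 by blast
    qed
    let ?f = "fsum (Poly_Mapping.keys p) (\<lambda>m. fsmul (Poly_Mapping.lookup p m) (fbasis (N d m) :: btree \<Rightarrow> 'k))"
    have h1: "?f \<in> FA_sq d"
    proof (rule FA_sq_fsum)
      show "finite (Poly_Mapping.keys p)" by simp
    next
      fix m assume "m \<in> Poly_Mapping.keys p"
      then have "isNode (N d m)" "W d (N d m)" using pm by blast+
      then show "fsmul (Poly_Mapping.lookup p m) (fbasis (N d m) :: btree \<Rightarrow> 'k) \<in> FA_sq d"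
        by (intro FA_sq.smul FA_sq_fbasis)
    qed
    have h2: "phi True ?f = p"
    proof -
      have "phi True ?f = (\<Sum>m\<in>Poly_Mapping.keys p. phi True (fsmul (Poly_Mapping.lookup p m) (fbasis (N d m) :: btree \<Rightarrow> 'k)))"
        by (rule phi_fsum) (simp, rule fin_fsmul, simp)
      also have "\<dots> = (\<Sum>m\<in>Poly_Mapping.keys p. Poly_Mapping.single m (Poly_Mapping.lookup p m))"
      proof (rule sum.cong[OF refl])
        fix m assume "m \<in> Poly_Mapping.keys p"
        then have "mon True (N d m) = m" using pm[of m] by simp
        then show "phi True (fsmul (Poly_Mapping.lookup p m) (fbasis (N d m) :: btree \<Rightarrow> 'k)) = Poly_Mapping.single m (Poly_Mapping.lookup p m)"
          by (simp add: phi_fsmul psmul_conv mult_single)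
      qed
      also have "\<dots> = p" by (rule sum_singles)
      finally show ?thesis .
    qed
    show "p \<in> phi True ` FA_sq d" by (rule image_eqI[where f="phi True", OF h2[symmetric] h1])
  qed
qed

lemma iso_phi: "induces_iso d (phi True :: (btree \<Rightarrow> 'k::field) \<Rightarrow> 'k pol) (omega_tensor d)"
  unfolding induces_iso_def
proof (intro conjI ballI allI)
  fix f g :: "btree \<Rightarrow> 'k" assume "f \<in> FA_sq d" "g \<in> FA_sq d"
  then show "phi True (fadd f g) = phi True f + phi True g"
    using FA_sq_props[of f d] FA_sq_props[of g d] by (simp add: phi_fadd)
next
  fix f :: "btree \<Rightarrow> 'k" and c assume "f \<in> FA_sq d"
  then show "phi True (fsmul c f) = psmul c (phi True f)"
    using FA_sq_props[of f d] by (simp add: phi_fsmul)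
next
  show "phi True ` FA_sq d = (omega_tensor d :: 'k pol set)" by (rule image_phi)
next
  fix f :: "btree \<Rightarrow> 'k" assume f: "f \<in> FA_sq d"
  show "(phi True f = 0) = (f \<in> bicomm_ideal d)"
  proof
    assume "phi True f = 0" then show "f \<in> bicomm_ideal d" by (rule kernel[OF f])
  next
    assume "f \<in> bicomm_ideal d" then show "phi True f = 0" using ideal_phi by blast
  qed
qed

theorem lemma3p1:
  fixes d :: nat
  assumes "d \<ge> 1"
  shows "(\<exists>\<phi> :: (btree \<Rightarrow> 'k::field_char_0) \<Rightarrow> 'k pol.
            induces_iso d \<phi> (omega_tensor d) \<and>
            (\<forall>\<alpha> f. f \<in> FA_sq d \<and> FA_homog \<alpha> f \<longrightarrow> pol_homog \<alpha> (\<phi> f)))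
       \<and> (\<exists>\<psi> :: (btree \<Rightarrow> 'k) \<Rightarrow> 'k pol.
            induces_iso d \<psi> (Wsum d) \<and>
            (\<forall>g\<in>GL d. \<forall>f\<in>FA_sq d. \<psi> (act_FA d g f) = act_pol d g (\<psi> f)))"
proof (intro conjI)
  have homog: "\<forall>\<alpha> f. f \<in> FA_sq d \<and> FA_homog \<alpha> f \<longrightarrow> pol_homog \<alpha> (phi True f :: 'k pol)"
  proof (intro allI impI)
    fix \<alpha> and f :: "btree \<Rightarrow> 'k" assume a: "f \<in> FA_sq d \<and> FA_homog \<alpha> f"
    show "pol_homog \<alpha> (phi True f)" unfolding pol_homog_def
    proof
      fix m assume "m \<in> Poly_Mapping.keys (phi True f)"
      then obtain t where t: "t \<in> supp f" "m = mon True t" using keys_phi by blast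
      then have "tdeg t = \<alpha>" using a unfolding FA_homog_def supp_def by blast
      then show "mdeg m = \<alpha>" using t mdeg_mon by simp
    qed
  qed
  show "\<exists>\<phi> :: (btree \<Rightarrow> 'k::field_char_0) \<Rightarrow> 'k pol.
            induces_iso d \<phi> (omega_tensor d) \<and>
            (\<forall>\<alpha> f. f \<in> FA_sq d \<and> FA_homog \<alpha> f \<longrightarrow> pol_homog \<alpha> (\<phi> f))"
    by (rule exI[of _ "phi True"]) (intro conjI iso_phi homog)
  show "\<exists>\<psi> :: (btree \<Rightarrow> 'k) \<Rightarrow> 'k pol.
            induces_iso d \<psi> (Wsum d) \<and>
            (\<forall>g\<in>GL d. \<forall>f\<in>FA_sq d. \<psi> (act_FA d g f) = act_pol d g (\<psi> f))"
  proof (rule exI[of _ "phi True"], intro conjI ballI)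
    show "induces_iso d (phi True) (Wsum d :: 'k pol set)" unfolding Wsum_eq by (rule iso_phi)
  next
    fix g and f :: "btree \<Rightarrow> 'k" assume "f \<in> FA_sq d"
    then show "phi True (act_FA d g f) = act_pol d g (phi True f :: 'k pol)" by (rule equivariant)
  qed
qed

end
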